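(* Let $\Omega=\Omega_0\cup\Omega_1$ be an at most unary topological signature and let $X$ be an arbitrary topological space. Then the Polish representation $\Phi_X:\overline{\Omega}_X\mathsf{Fin}_\Omega\to S_{\mathsf M}$ is an isomorphism of topological algebras.
   Context: $\Omega=\biguplus_n\Omega_n$ is a topological signature with $\Omega_n=\emptyset$ for $n\ge2$. A topological $\Omega$-algebra has continuous evaluation maps $\Omega_n\times A^n\to A$. $\mathsf{Fin}_\Omega$ is the class of finite discrete topological $\Omega$-algebras; $\overline{\Omega}_X\mathsf{Fin}_\Omega$ is the free profinite $\Omega$-algebra over the space $X$: a profinite $\Omega$-algebra with a continuous map $\iota:X\to\overline{\Omega}_X\mathsf{Fin}_\Omega$ whose image generates a dense subalgebra, such that every continuous map from $X$ into a member of $\mathsf{Fin}_\Omega$ extends uniquely through $\iota$ to a continuous homomorphism. Let $X\cup\Omega$ be the topological disjoint union of $X$ and the spaces $\Omega_n$, and $\overline{\Omega}_{X\cup\Omega}\mathsf M$ the free profinite monoid over this space (a profinite monoid with continuous map $\eta$ from $X\cup\Omega$ whose image generates a dense submonoid, universal for continuous maps into finite discrete monoids). It is an $\Omega$-algebra via $E_n(w,u_1,\dots,u_n)=\eta(w)u_1\cdots u_n$, and $S_{\mathsf M}$ is the closed $\Omega$-subalgebra generated by $\eta(X)$. The Polish representation $\Phi_X$ is the unique continuous $\Omega$-homomorphism $\overline{\Omega}_X\mathsf{Fin}_\Omega\to S_{\mathsf M}$ with $\Phi_X\circ\iota=\eta|_X$. *)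

theory Defs
  imports "HOL-Analysis.Analysis"
begin

lemma istopology_disjoint_union2:
  "istopology (\<lambda>U. U \<subseteq> Inl ` topspace X \<union> Inr ` topspace Y
                  \<and> openin X (Inl -` U) \<and> openin Y (Inr -` U))"
  unfolding istopology_def
  by (intro conjI allI impI) (auto simp: vimage_Union intro!: openin_Union)

definition disjoint_union_topology :: "'a topology \<Rightarrow> 'b topology \<Rightarrow> ('a + 'b) topology" where
  "disjoint_union_topology X Y = topology (\<lambda>U. U \<subseteq> Inl ` topspace X \<union> Inr ` topspace Y
                  \<and> openin X (Inl -` U) \<and> openin Y (Inr -` U))"

text \<open>The signature: T0 is the space Omega_0 of constant symbols, T1 the space Omega_1
 of unary symbols (Omega_n is empty for n >= 2).\<close>

definition top_alg :: "'c topology \<Rightarrow> 'u topology \<Rightarrow> 'a topology \<Rightarrow> ('c \<Rightarrow> 'a) \<Rightarrow> ('u \<Rightarrow> 'a \<Rightarrow> 'a) \<Rightarrow> bool" where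
  "top_alg T0 T1 A c f \<longleftrightarrow>
     continuous_map T0 A c \<and> continuous_map (prod_topology T1 A) A (\<lambda>(w, a). f w a)"

definition alg_hom :: "'c topology \<Rightarrow> 'u topology \<Rightarrow>
     'a topology \<Rightarrow> ('c \<Rightarrow> 'a) \<Rightarrow> ('u \<Rightarrow> 'a \<Rightarrow> 'a) \<Rightarrow>
     'b topology \<Rightarrow> ('c \<Rightarrow> 'b) \<Rightarrow> ('u \<Rightarrow> 'b \<Rightarrow> 'b) \<Rightarrow> ('a \<Rightarrow> 'b) \<Rightarrow> bool" where
  "alg_hom T0 T1 A c f B d g h \<longleftrightarrow>
     (\<forall>a\<in>topspace A. h a \<in> topspace B) \<and>
     (\<forall>w\<in>topspace T0. h (c w) = d w) \<and>
     (\<forall>w\<in>topspace T1. \<forall>a\<in>topspace A. h (f w a) = g w (h a))"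

definition top_alg_iso :: "'c topology \<Rightarrow> 'u topology \<Rightarrow>
     'a topology \<Rightarrow> ('c \<Rightarrow> 'a) \<Rightarrow> ('u \<Rightarrow> 'a \<Rightarrow> 'a) \<Rightarrow>
     'b topology \<Rightarrow> ('c \<Rightarrow> 'b) \<Rightarrow> ('u \<Rightarrow> 'b \<Rightarrow> 'b) \<Rightarrow> ('a \<Rightarrow> 'b) \<Rightarrow> bool" where
  "top_alg_iso T0 T1 A c f B d g h \<longleftrightarrow>
     alg_hom T0 T1 A c f B d g h \<and> homeomorphic_map A B h"

text \<open>Members of Fin_Omega: finite discrete topological algebras. Every finite algebra is
 isomorphic to one whose carrier is a subset of nat, so we take carriers in nat.\<close>
definition fin_alg :: "'c topology \<Rightarrow> 'u topology \<Rightarrow> nat set \<Rightarrow> ('c \<Rightarrow> nat) \<Rightarrow> ('u \<Rightarrow> nat \<Rightarrow> nat) \<Rightarrow> bool" where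
  "fin_alg T0 T1 K d g \<longleftrightarrow> finite K \<and> top_alg T0 T1 (discrete_topology K) d g"

definition profinite_alg :: "'c topology \<Rightarrow> 'u topology \<Rightarrow> 'a topology \<Rightarrow> ('c \<Rightarrow> 'a) \<Rightarrow> ('u \<Rightarrow> 'a \<Rightarrow> 'a) \<Rightarrow> bool" where
  "profinite_alg T0 T1 A c f \<longleftrightarrow>
     top_alg T0 T1 A c f \<and> compact_space A \<and>
     (\<forall>x\<in>topspace A. \<forall>y\<in>topspace A. x \<noteq> y \<longrightarrow>
        (\<exists>K d g h. fin_alg T0 T1 K d g \<and> continuous_map A (discrete_topology K) h \<and>
                   alg_hom T0 T1 A c f (discrete_topology K) d g h \<and> h x \<noteq> h y))"

definition subalg_gen :: "'c topology \<Rightarrow> 'u topology \<Rightarrow> 'a topology \<Rightarrow> ('c \<Rightarrow> 'a) \<Rightarrow> ('u \<Rightarrow> 'a \<Rightarrow> 'a) \<Rightarrow> 'a set \<Rightarrow> 'a set" where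
  "subalg_gen T0 T1 A c f G = \<Inter>{S. S \<subseteq> topspace A \<and> G \<subseteq> S \<and>
        (\<forall>w\<in>topspace T0. c w \<in> S) \<and> (\<forall>w\<in>topspace T1. \<forall>a\<in>S. f w a \<in> S)}"

definition free_profinite_alg :: "'c topology \<Rightarrow> 'u topology \<Rightarrow> 'x topology \<Rightarrow>
     'a topology \<Rightarrow> ('c \<Rightarrow> 'a) \<Rightarrow> ('u \<Rightarrow> 'a \<Rightarrow> 'a) \<Rightarrow> ('x \<Rightarrow> 'a) \<Rightarrow> bool" where
  "free_profinite_alg T0 T1 X A c f \<iota> \<longleftrightarrow>
     profinite_alg T0 T1 A c f \<and> continuous_map X A \<iota> \<and>
     A closure_of (subalg_gen T0 T1 A c f (\<iota> ` topspace X)) = topspace A \<and>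
     (\<forall>K d g \<phi>. fin_alg T0 T1 K d g \<and> continuous_map X (discrete_topology K) \<phi> \<longrightarrow>
        (\<exists>\<psi>. continuous_map A (discrete_topology K) \<psi> \<and>
              alg_hom T0 T1 A c f (discrete_topology K) d g \<psi> \<and>
              (\<forall>x\<in>topspace X. \<psi> (\<iota> x) = \<phi> x) \<and>
              (\<forall>\<psi>'. continuous_map A (discrete_topology K) \<psi>' \<and>
                     alg_hom T0 T1 A c f (discrete_topology K) d g \<psi>' \<and>
                     (\<forall>x\<in>topspace X. \<psi>' (\<iota> x) = \<phi> x) \<longrightarrow>
                     (\<forall>a\<in>topspace A. \<psi>' a = \<psi> a))))"

definition top_monoid :: "'m topology \<Rightarrow> ('m \<Rightarrow> 'm \<Rightarrow> 'm) \<Rightarrow> 'm \<Rightarrow> bool" where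
  "top_monoid M m e \<longleftrightarrow>
     e \<in> topspace M \<and> continuous_map (prod_topology M M) M (\<lambda>(a, b). m a b) \<and>
     (\<forall>a\<in>topspace M. \<forall>b\<in>topspace M. \<forall>c\<in>topspace M. m (m a b) c = m a (m b c)) \<and>
     (\<forall>a\<in>topspace M. m e a = a \<and> m a e = a)"

definition mon_hom :: "'m topology \<Rightarrow> ('m \<Rightarrow> 'm \<Rightarrow> 'm) \<Rightarrow> 'm \<Rightarrow>
     'n topology \<Rightarrow> ('n \<Rightarrow> 'n \<Rightarrow> 'n) \<Rightarrow> 'n \<Rightarrow> ('m \<Rightarrow> 'n) \<Rightarrow> bool" where
  "mon_hom M m e N n u h \<longleftrightarrow>
     (\<forall>a\<in>topspace M. h a \<in> topspace N) \<and> h e = u \<and>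
     (\<forall>a\<in>topspace M. \<forall>b\<in>topspace M. h (m a b) = n (h a) (h b))"

text \<open>Finite discrete monoids (carriers in nat, up to isomorphism).\<close>
definition fin_monoid :: "nat set \<Rightarrow> (nat \<Rightarrow> nat \<Rightarrow> nat) \<Rightarrow> nat \<Rightarrow> bool" where
  "fin_monoid K n u \<longleftrightarrow> finite K \<and> top_monoid (discrete_topology K) n u"

definition profinite_monoid :: "'m topology \<Rightarrow> ('m \<Rightarrow> 'm \<Rightarrow> 'm) \<Rightarrow> 'm \<Rightarrow> bool" where
  "profinite_monoid M m e \<longleftrightarrow>
     top_monoid M m e \<and> compact_space M \<and>
     (\<forall>x\<in>topspace M. \<forall>y\<in>topspace M. x \<noteq> y \<longrightarrow>
        (\<exists>K n u h. fin_monoid K n u \<and> continuous_map M (discrete_topology K) h \<and>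
                   mon_hom M m e (discrete_topology K) n u h \<and> h x \<noteq> h y))"

definition submonoid_gen :: "'m topology \<Rightarrow> ('m \<Rightarrow> 'm \<Rightarrow> 'm) \<Rightarrow> 'm \<Rightarrow> 'm set \<Rightarrow> 'm set" where
  "submonoid_gen M m e G = \<Inter>{S. S \<subseteq> topspace M \<and> G \<subseteq> S \<and> e \<in> S \<and>
        (\<forall>a\<in>S. \<forall>b\<in>S. m a b \<in> S)}"

definition free_profinite_monoid :: "'y topology \<Rightarrow>
     'm topology \<Rightarrow> ('m \<Rightarrow> 'm \<Rightarrow> 'm) \<Rightarrow> 'm \<Rightarrow> ('y \<Rightarrow> 'm) \<Rightarrow> bool" where
  "free_profinite_monoid Y M m e \<eta> \<longleftrightarrow>
     profinite_monoid M m e \<and> continuous_map Y M \<eta> \<and>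
     M closure_of (submonoid_gen M m e (\<eta> ` topspace Y)) = topspace M \<and>
     (\<forall>K n u \<phi>. fin_monoid K n u \<and> continuous_map Y (discrete_topology K) \<phi> \<longrightarrow>
        (\<exists>\<psi>. continuous_map M (discrete_topology K) \<psi> \<and>
              mon_hom M m e (discrete_topology K) n u \<psi> \<and>
              (\<forall>y\<in>topspace Y. \<psi> (\<eta> y) = \<phi> y) \<and>
              (\<forall>\<psi>'. continuous_map M (discrete_topology K) \<psi>' \<and>
                     mon_hom M m e (discrete_topology K) n u \<psi>' \<and>
                     (\<forall>y\<in>topspace Y. \<psi>' (\<eta> y) = \<phi> y) \<longrightarrow>
                     (\<forall>a\<in>topspace M. \<psi>' a = \<psi> a))))"

text \<open>The space X \<union> Omega = X + (Omega_0 + Omega_1).\<close>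
definition X_Omega_space :: "'x topology \<Rightarrow> 'c topology \<Rightarrow> 'u topology \<Rightarrow> ('x + ('c + 'u)) topology" where
  "X_Omega_space X T0 T1 = disjoint_union_topology X (disjoint_union_topology T0 T1)"

definition E0 :: "('x + ('c + 'u) \<Rightarrow> 'm) \<Rightarrow> 'c \<Rightarrow> 'm" where
  "E0 \<eta> w = \<eta> (Inr (Inl w))"

definition E1 :: "('m \<Rightarrow> 'm \<Rightarrow> 'm) \<Rightarrow> ('x + ('c + 'u) \<Rightarrow> 'm) \<Rightarrow> 'u \<Rightarrow> 'm \<Rightarrow> 'm" where
  "E1 m \<eta> w a = m (\<eta> (Inr (Inr w))) a"

definition S_M :: "'x topology \<Rightarrow> 'c topology \<Rightarrow> 'u topology \<Rightarrow>
     'm topology \<Rightarrow> ('m \<Rightarrow> 'm \<Rightarrow> 'm) \<Rightarrow> ('x + ('c + 'u) \<Rightarrow> 'm) \<Rightarrow> 'm set" where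
  "S_M X T0 T1 M m \<eta> = \<Inter>{S. closedin M S \<and> (\<lambda>x. \<eta> (Inl x)) ` topspace X \<subseteq> S \<and>
        (\<forall>w\<in>topspace T0. E0 \<eta> w \<in> S) \<and> (\<forall>w\<in>topspace T1. \<forall>a\<in>S. E1 m \<eta> w a \<in> S)}"

end

theory Submission
  imports Defs
begin


lemma cont_discrete_iff:
  "continuous_map X (discrete_topology K) f \<longleftrightarrow>
     f ` topspace X \<subseteq> K \<and> (\<forall>k. openin X {x\<in>topspace X. f x = k})"
proof
  assume c: "continuous_map X (discrete_topology K) f"
  show "f ` topspace X \<subseteq> K \<and> (\<forall>k. openin X {x\<in>topspace X. f x = k})"
  proof (intro conjI allI)
    show "f ` topspace X \<subseteq> K" using continuous_map_image_subset_topspace[OF c] by simp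
    fix k
    show "openin X {x\<in>topspace X. f x = k}"
    proof (cases "k \<in> K")
      case True
      then have "openin X {x\<in>topspace X. f x \<in> {k}}"
        using mp[OF spec[OF c[unfolded continuous_map_def, THEN conjunct2], of "{k}"]] True by simp
      then show ?thesis by simp
    next
      case False
      then have "{x\<in>topspace X. f x = k} = {}" using continuous_map_image_subset_topspace[OF c] by auto
      then show ?thesis by (metis openin_empty)
    qed
  qed
next
  assume a: "f ` topspace X \<subseteq> K \<and> (\<forall>k. openin X {x\<in>topspace X. f x = k})"
  show "continuous_map X (discrete_topology K) f"
    unfolding continuous_map_def
  proof (intro conjI allI impI)
    show "f \<in> topspace X \<rightarrow> topspace (discrete_topology K)" using a by auto
    fix U assume "openin (discrete_topology K) U"
    have "{x \<in> topspace X. f x \<in> U} = (\<Union>k\<in>U. {x\<in>topspace X. f x = k})" by auto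
    moreover have "openin X (\<Union>k\<in>U. {x\<in>topspace X. f x = k})" using a by auto
    ultimately show "openin X {x \<in> topspace X. f x \<in> U}" by simp
  qed
qed

lemma sep_Hausdorff:
  assumes "\<forall>x\<in>topspace A. \<forall>y\<in>topspace A. x \<noteq> y \<longrightarrow>
        (\<exists>(K::'k set) h. continuous_map A (discrete_topology K) h \<and> h x \<noteq> h y)"
  shows "Hausdorff_space A"
  unfolding Hausdorff_space_def
proof (intro allI impI)
  fix x y assume "x \<in> topspace A \<and> y \<in> topspace A \<and> x \<noteq> y"
  then have xy: "x \<in> topspace A" "y \<in> topspace A" "x \<noteq> y" by auto
  then obtain K :: "'k set" and h where h: "continuous_map A (discrete_topology K) h" "h x \<noteq> h y"
    using assms by blast
  have o: "openin A {z\<in>topspace A. h z = k}" for k using h(1) unfolding cont_discrete_iff by blast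
  show "\<exists>U V. openin A U \<and> openin A V \<and> x \<in> U \<and> y \<in> V \<and> disjnt U V"
    apply (rule exI[of _ "{z\<in>topspace A. h z = h x}"], rule exI[of _ "{z\<in>topspace A. h z = h y}"])
    using o xy h(2) by (auto simp: disjnt_def)
qed

lemma openin_dut:
  "openin (disjoint_union_topology X Y) U \<longleftrightarrow> U \<subseteq> Inl ` topspace X \<union> Inr ` topspace Y
                  \<and> openin X (Inl -` U) \<and> openin Y (Inr -` U)"
  unfolding disjoint_union_topology_def
  by (simp add: istopology_disjoint_union2 topology_inverse')

lemma topspace_dut:
  "topspace (disjoint_union_topology X Y) = Inl ` topspace X \<union> Inr ` topspace Y"
proof
  show "topspace (disjoint_union_topology X Y) \<subseteq> Inl ` topspace X \<union> Inr ` topspace Y"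
    using openin_dut[of X Y "topspace (disjoint_union_topology X Y)"] by simp
  have "Inl -` (Inl ` topspace X \<union> Inr ` topspace Y) = topspace X" by auto
  moreover have "Inr -` (Inl ` topspace X \<union> Inr ` topspace Y) = topspace Y" by auto
  ultimately have "openin (disjoint_union_topology X Y) (Inl ` topspace X \<union> Inr ` topspace Y)"
    by (simp add: openin_dut)
  then show "Inl ` topspace X \<union> Inr ` topspace Y \<subseteq> topspace (disjoint_union_topology X Y)"
    by (rule openin_subset)
qed

lemma continuous_map_dut:
  assumes "continuous_map X Z (\<lambda>x. f (Inl x))" "continuous_map Y Z (\<lambda>y. f (Inr y))"
  shows "continuous_map (disjoint_union_topology X Y) Z f"
  unfolding continuous_map_def
proof (intro conjI allI impI)
  show "f \<in> topspace (disjoint_union_topology X Y) \<rightarrow> topspace Z"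
    using assms by (auto simp: topspace_dut continuous_map_def)
  fix U assume U: "openin Z U"
  let ?P = "{x \<in> topspace (disjoint_union_topology X Y). f x \<in> U}"
  have "Inl -` ?P = {x\<in>topspace X. f (Inl x) \<in> U}" by (auto simp: topspace_dut)
  moreover have "Inr -` ?P = {x\<in>topspace Y. f (Inr x) \<in> U}" by (auto simp: topspace_dut)
  ultimately show "openin (disjoint_union_topology X Y) ?P"
    using assms U unfolding openin_dut continuous_map_def by (auto simp: topspace_dut)
qed

definition FK :: "nat set \<Rightarrow> (nat \<Rightarrow> nat) set" where
  "FK K = {f. (\<forall>k\<in>K. f k \<in> K) \<and> (\<forall>k. k \<notin> K \<longrightarrow> f k = k)}"

lemma finite_FK: assumes "finite K" shows "finite (FK K)"
proof -
  have "inj_on (\<lambda>f. restrict f K) (FK K)"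
  proof
    fix f g assume "f \<in> FK K" "g \<in> FK K" "restrict f K = restrict g K"
    then show "f = g"
    proof (intro ext)
      fix k assume f: "f \<in> FK K" and g: "g \<in> FK K" and r: "restrict f K = restrict g K"
      show "f k = g k"
      proof (cases "k \<in> K")
        case True
        have "restrict f K k = restrict g K k" using r by simp
        then show ?thesis using True by simp
      next
        case False
        then show ?thesis using f g by (simp add: FK_def)
      qed
    qed
  qed
  moreover have "(\<lambda>f. restrict f K) ` FK K \<subseteq> K \<rightarrow>\<^sub>E K" by (auto simp: FK_def)
  moreover have "finite (K \<rightarrow>\<^sub>E K)" using assms by (intro finite_PiE) auto
  ultimately have "finite ((\<lambda>f. restrict f K) ` FK K)" using finite_subset by blast
  then show ?thesis using \<open>inj_on (\<lambda>f. restrict f K) (FK K)\<close> by (rule finite_imageD)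
qed

lemma id_FK: "id \<in> FK K" by (simp add: FK_def)
lemma comp_FK: "f \<in> FK K \<Longrightarrow> g \<in> FK K \<Longrightarrow> f \<circ> g \<in> FK K" by (simp add: FK_def)

definition enc :: "nat set \<Rightarrow> (nat \<Rightarrow> nat) \<Rightarrow> nat" where "enc K = to_nat_on (FK K)"
definition dec :: "nat set \<Rightarrow> nat \<Rightarrow> (nat \<Rightarrow> nat)" where "dec K = from_nat_into (FK K)"
definition mop :: "nat set \<Rightarrow> nat \<Rightarrow> nat \<Rightarrow> nat" where "mop K a b = enc K (dec K a \<circ> dec K b)"

lemma dec_enc: "finite K \<Longrightarrow> f \<in> FK K \<Longrightarrow> dec K (enc K f) = f"
  by (simp add: enc_def dec_def countable_finite finite_FK)
lemma dec_FK: "dec K n \<in> FK K"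
proof -
  have "FK K \<noteq> {}" using id_FK by blast
  then show ?thesis unfolding dec_def by (rule from_nat_into)
qed

lemma mop_enc: "finite K \<Longrightarrow> f \<in> FK K \<Longrightarrow> g \<in> FK K \<Longrightarrow> mop K (enc K f) (enc K g) = enc K (f \<circ> g)"
  by (simp add: mop_def dec_enc)

lemma fin_monoid_FK: assumes K: "finite K"
  shows "fin_monoid (enc K ` FK K) (mop K) (enc K id)"
  unfolding fin_monoid_def top_monoid_def
proof (intro conjI ballI)
  show "finite (enc K ` FK K)" using finite_FK[OF K] by simp
  show "enc K id \<in> topspace (discrete_topology (enc K ` FK K))" using id_FK by simp
  show "continuous_map (prod_topology (discrete_topology (enc K ` FK K)) (discrete_topology (enc K ` FK K)))
     (discrete_topology (enc K ` FK K)) (\<lambda>(a, b). mop K a b)"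
    unfolding prod_topology_discrete_topology[symmetric] continuous_map_from_discrete_topology
    using K by (auto simp: mop_enc comp_FK)
  fix a b c assume "a \<in> topspace (discrete_topology (enc K ` FK K))"
    "b \<in> topspace (discrete_topology (enc K ` FK K))" "c \<in> topspace (discrete_topology (enc K ` FK K))"
  then show "mop K (mop K a b) c = mop K a (mop K b c)"
    using K by (auto simp: mop_enc comp_FK o_assoc)
next
  fix a assume "a \<in> topspace (discrete_topology (enc K ` FK K))"
  then show "mop K (enc K id) a = a" "mop K a (enc K id) = a"
    using K by (auto simp: mop_enc id_FK)
qed


theorem theorem4p15:
  fixes X :: "'x topology" and T0 :: "'c topology" and T1 :: "'u topology"
    and F :: "'a topology" and cF :: "'c \<Rightarrow> 'a" and fF :: "'u \<Rightarrow> 'a \<Rightarrow> 'a" and \<iota> :: "'x \<Rightarrow> 'a"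
    and M :: "'m topology" and m :: "'m \<Rightarrow> 'm \<Rightarrow> 'm" and e :: 'm
    and \<eta> :: "'x + ('c + 'u) \<Rightarrow> 'm"
    and \<Phi> :: "'a \<Rightarrow> 'm"
  assumes free_alg: "free_profinite_alg T0 T1 X F cF fF \<iota>"
    and free_mon: "free_profinite_monoid (X_Omega_space X T0 T1) M m e \<eta>"
    and Phi_cont: "continuous_map F (subtopology M (S_M X T0 T1 M m \<eta>)) \<Phi>"
    and Phi_hom: "alg_hom T0 T1 F cF fF (subtopology M (S_M X T0 T1 M m \<eta>)) (E0 \<eta>) (E1 m \<eta>) \<Phi>"
    and Phi_iota: "\<forall>x\<in>topspace X. \<Phi> (\<iota> x) = \<eta> (Inl x)"
  shows "top_alg_iso T0 T1 F cF fF (subtopology M (S_M X T0 T1 M m \<eta>)) (E0 \<eta>) (E1 m \<eta>) \<Phi>"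
proof -
  define Y where "Y = X_Omega_space X T0 T1"
  define S where "S = S_M X T0 T1 M m \<eta>"
  have topY: "topspace Y = Inl ` topspace X \<union> Inr ` (Inl ` topspace T0 \<union> Inr ` topspace T1)"
    by (simp add: Y_def X_Omega_space_def topspace_dut)
  note FA = free_alg[unfolded free_profinite_alg_def]
  have profF: "profinite_alg T0 T1 F cF fF" by (rule conjunct1[OF FA])
  have iota_c: "continuous_map X F \<iota>" by (rule conjunct1[OF conjunct2[OF FA]])
  note freeF = conjunct2[OF conjunct2[OF conjunct2[OF FA]]]
  note PA = profF[unfolded profinite_alg_def]
  note TA = conjunct1[OF PA, unfolded top_alg_def]
  have cF_c: "continuous_map T0 F cF" by (rule conjunct1[OF TA])
  have fF_c: "continuous_map (prod_topology T1 F) F (\<lambda>(w, a). fF w a)" by (rule conjunct2[OF TA])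
  have compF: "compact_space F" by (rule conjunct1[OF conjunct2[OF PA]])
  note sepF = conjunct2[OF conjunct2[OF PA]]
  have fF_in: "fF w a \<in> topspace F" if "w \<in> topspace T1" "a \<in> topspace F" for w a
  proof -
    have "(w, a) \<in> topspace (prod_topology T1 F)" using that by simp
    from funcset_mem[OF continuous_map_funspace[OF fF_c] this] show ?thesis by simp
  qed
  have cF_in: "cF w \<in> topspace F" if "w \<in> topspace T0" for w
    using funcset_mem[OF continuous_map_funspace[OF cF_c] that] by simp
  note FM = free_mon[unfolded free_profinite_monoid_def, folded Y_def]
  have profM: "profinite_monoid M m e" by (rule conjunct1[OF FM])
  have eta_c: "continuous_map Y M \<eta>" by (rule conjunct1[OF conjunct2[OF FM]])
  note freeM = conjunct2[OF conjunct2[OF conjunct2[OF FM]]]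
  have eta_in: "\<eta> y \<in> topspace M" if "y \<in> topspace Y" for y
    using funcset_mem[OF continuous_map_funspace[OF eta_c] that] by simp
  note sepM = conjunct2[OF conjunct2[OF profM[unfolded profinite_monoid_def]]]
  have HM: "Hausdorff_space M"
  proof (rule sep_Hausdorff[where 'k = nat])
    show "\<forall>x\<in>topspace M. \<forall>y\<in>topspace M. x \<noteq> y \<longrightarrow>
        (\<exists>(K::nat set) h. continuous_map M (discrete_topology K) h \<and> h x \<noteq> h y)"
    proof (intro ballI impI)
      fix x y assume x: "x \<in> topspace M" and y: "y \<in> topspace M" and ne: "x \<noteq> y"
      obtain K :: "nat set" and h where "continuous_map M (discrete_topology K) h" "h x \<noteq> h y"
        using mp[OF bspec[OF bspec[OF sepM x] y] ne] by (elim exE conjE) (rule that; assumption)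
      then show "\<exists>(K::nat set) h. continuous_map M (discrete_topology K) h \<and> h x \<noteq> h y" by blast
    qed
  qed
  have PhiM: "continuous_map F M \<Phi>" and PhiS: "\<Phi> ` topspace F \<subseteq> S"
    using Phi_cont unfolding continuous_map_in_subtopology S_def by auto
  have Phi_in: "\<Phi> a \<in> topspace M" if "a \<in> topspace F" for a
    using funcset_mem[OF continuous_map_funspace[OF PhiM] that] by simp
  note HomP = Phi_hom[unfolded alg_hom_def]
  have hom0: "\<Phi> (cF w) = E0 \<eta> w" if "w \<in> topspace T0" for w
    using bspec[OF conjunct1[OF conjunct2[OF HomP]] that] by simp
  have hom1: "\<Phi> (fF w a) = E1 m \<eta> w (\<Phi> a)" if "w \<in> topspace T1" "a \<in> topspace F" for w a
    using bspec[OF bspec[OF conjunct2[OF conjunct2[OF HomP]] that(1)] that(2)] by simp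
  have closedmap: "closed_map F (subtopology M S) \<Phi>"
    using Phi_cont compF HM by (simp add: S_def continuous_imp_closed_map Hausdorff_space_subtopology)
  have img: "\<Phi> ` topspace F = topspace (subtopology M S)"
  proof
    show "\<Phi> ` topspace F \<subseteq> topspace (subtopology M S)"
      using continuous_map_image_subset_topspace[OF Phi_cont] unfolding S_def .
    have "compactin M (\<Phi> ` topspace F)"
      using image_compactin[OF compF[unfolded compact_space_def] PhiM] .
    then have cl: "closedin M (\<Phi> ` topspace F)" by (rule compactin_imp_closedin[OF HM])
    have "S \<subseteq> \<Phi> ` topspace F"
      unfolding S_def S_M_def
    proof (rule Inter_lower, safe)
      show "closedin M (\<Phi> ` topspace F)" by (fact cl)
    next
      fix x assume "x \<in> topspace X"
      then have "\<iota> x \<in> topspace F" "\<eta> (Inl x) = \<Phi> (\<iota> x)"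
        using funcset_mem[OF continuous_map_funspace[OF iota_c]] Phi_iota by auto
      then show "\<eta> (Inl x) \<in> \<Phi> ` topspace F" by (rule rev_image_eqI)
    next
      fix w assume "w \<in> topspace T0"
      then show "E0 \<eta> w \<in> \<Phi> ` topspace F" using hom0 cF_in by (metis image_eqI)
    next
      fix w a assume "w \<in> topspace T1" "a \<in> topspace F"
      then show "E1 m \<eta> w (\<Phi> a) \<in> \<Phi> ` topspace F" using hom1 fF_in by (metis image_eqI)
    qed
    then show "topspace (subtopology M S) \<subseteq> \<Phi> ` topspace F" by auto
  qed
  have inj: "inj_on \<Phi> (topspace F)"
  proof (rule inj_onI, rule ccontr)
    fix x y assume x: "x \<in> topspace F" and y: "y \<in> topspace F" and eq: "\<Phi> x = \<Phi> y" and ne: "x \<noteq> y"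
    obtain K d g h where fa: "fin_alg T0 T1 K d g" and hc: "continuous_map F (discrete_topology K) h"
      and hh: "alg_hom T0 T1 F cF fF (discrete_topology K) d g h" and hxy: "h x \<noteq> h y"
      using mp[OF bspec[OF bspec[OF sepF x] y] ne] by (elim exE conjE) (rule that; assumption)
    have Kf: "finite K" and d_c: "continuous_map T0 (discrete_topology K) d"
      and g_c: "continuous_map (prod_topology T1 (discrete_topology K)) (discrete_topology K) (\<lambda>(w, a). g w a)"
      using fa unfolding fin_alg_def top_alg_def by auto
    have h_in: "h a \<in> K" if "a \<in> topspace F" for a
      using funcset_mem[OF continuous_map_funspace[OF hc] that] by simp
    have d_in: "d w \<in> K" if "w \<in> topspace T0" for w
      using funcset_mem[OF continuous_map_funspace[OF d_c] that] by simp
    have g_in: "g w k \<in> K" if "w \<in> topspace T1" "k \<in> K" for w k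
    proof -
      have "(w, k) \<in> topspace (prod_topology T1 (discrete_topology K))" using that by simp
      from funcset_mem[OF continuous_map_funspace[OF g_c] this] show ?thesis by simp
    qed
    define k0 where "k0 = h x"
    have k0: "k0 \<in> K" using h_in x k0_def by simp
    define cst where "cst k = (\<lambda>z. if z \<in> K then k else z)" for k
    define gx where "gx w = (\<lambda>z. if z \<in> K then g w z else z)" for w
    have cst_FK: "cst k \<in> FK K" if "k \<in> K" for k using that by (simp add: cst_def FK_def)
    have gx_FK: "gx w \<in> FK K" if "w \<in> topspace T1" for w using that g_in by (simp add: gx_def FK_def)
    define C where "C = enc K ` FK K"
    define \<phi> :: "'x + ('c + 'u) \<Rightarrow> nat" where
      "\<phi> = case_sum (\<lambda>x. enc K (cst (h (\<iota> x)))) (case_sum (\<lambda>c. enc K (cst (d c))) (\<lambda>w. enc K (gx w)))"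
    have hi_c: "continuous_map X (discrete_topology K) (\<lambda>x. h (\<iota> x))"
      using continuous_map_compose[OF iota_c hc] by (simp add: o_def)
    have cst_c: "continuous_map (discrete_topology K) (discrete_topology C) (\<lambda>k. enc K (cst k))"
      using cst_FK by (auto simp: C_def)
    have gcoord: "openin T1 {w \<in> topspace T1. g w k = j}" if "k \<in> K" for k j
    proof -
      have "continuous_map T1 (prod_topology T1 (discrete_topology K)) (\<lambda>w. (w, k))"
        using that by (intro continuous_map_pairedI) (auto simp: continuous_map_id[unfolded id_def])
      from continuous_map_compose[OF this g_c]
      have "continuous_map T1 (discrete_topology K) (\<lambda>w. g w k)" by (simp add: o_def)
      then show ?thesis unfolding cont_discrete_iff by blast
    qed
    have gx_c: "continuous_map T1 (discrete_topology C) (\<lambda>w. enc K (gx w))"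
      unfolding cont_discrete_iff
    proof (intro conjI allI)
      show "(\<lambda>w. enc K (gx w)) ` topspace T1 \<subseteq> C" using gx_FK by (auto simp: C_def)
      fix n
      show "openin T1 {w \<in> topspace T1. enc K (gx w) = n}"
      proof (cases "n \<in> C")
        case False
        then have "{w \<in> topspace T1. enc K (gx w) = n} = {}" using gx_FK by (auto simp: C_def)
        then show ?thesis by (metis openin_empty)
      next
        case True
        then obtain f where f: "f \<in> FK K" "n = enc K f" by (auto simp: C_def)
        have eqv: "enc K (gx w) = n \<longleftrightarrow> (\<forall>k\<in>K. g w k = f k)" if w: "w \<in> topspace T1" for w
        proof -
          have "enc K (gx w) = n \<longleftrightarrow> gx w = f" using f dec_enc[OF Kf] gx_FK[OF w] by metis
          also have "\<dots> \<longleftrightarrow> (\<forall>k\<in>K. g w k = f k)" using f(1) by (auto simp: gx_def FK_def fun_eq_iff)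
          finally show ?thesis .
        qed
        have "{w \<in> topspace T1. enc K (gx w) = n} = (\<Inter>k\<in>K. {w \<in> topspace T1. g w k = f k}) \<inter> topspace T1"
          using eqv by auto
        moreover have "openin T1 ((\<Inter>k\<in>K. {w \<in> topspace T1. g w k = f k}) \<inter> topspace T1)"
          by (rule openin_INT[OF Kf gcoord])
        ultimately show ?thesis by simp
      qed
    qed
    have phi_c: "continuous_map Y (discrete_topology C) \<phi>"
      unfolding Y_def X_Omega_space_def
    proof (rule continuous_map_dut)
      show "continuous_map X (discrete_topology C) (\<lambda>x. \<phi> (Inl x))"
        using continuous_map_compose[OF hi_c cst_c] by (simp add: o_def \<phi>_def)
      show "continuous_map (disjoint_union_topology T0 T1) (discrete_topology C) (\<lambda>y. \<phi> (Inr y))"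
      proof (rule continuous_map_dut)
        show "continuous_map T0 (discrete_topology C) (\<lambda>x. \<phi> (Inr (Inl x)))"
          using continuous_map_compose[OF d_c cst_c] by (simp add: o_def \<phi>_def)
        show "continuous_map T1 (discrete_topology C) (\<lambda>x. \<phi> (Inr (Inr x)))"
          using gx_c by (simp add: \<phi>_def)
      qed
    qed
    obtain \<psi> where psi_c: "continuous_map M (discrete_topology C) \<psi>"
      and psi_h: "mon_hom M m e (discrete_topology C) (mop K) (enc K id) \<psi>"
      and psi_eta: "\<forall>y\<in>topspace Y. \<psi> (\<eta> y) = \<phi> y"
      using freeM[rule_format, OF conjI[OF fin_monoid_FK[OF Kf, folded C_def] phi_c]]
      by (elim exE conjE) (rule that; assumption)
    have psi_in: "\<psi> a \<in> C" if "a \<in> topspace M" for a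
      using funcset_mem[OF continuous_map_funspace[OF psi_c] that] by simp
    have psi_mul: "\<psi> (m a b) = mop K (\<psi> a) (\<psi> b)" if "a \<in> topspace M" "b \<in> topspace M" for a b
      using psi_h that unfolding mon_hom_def by simp
    define H where "H = (\<lambda>a. dec K (\<psi> (\<Phi> a)) k0)"
    have decC: "dec K n k0 \<in> K" for n using dec_FK[of K n] k0 by (auto simp: FK_def)
    have H_c: "continuous_map F (discrete_topology K) H"
    proof -
      have "continuous_map (discrete_topology C) (discrete_topology K) (\<lambda>n. dec K n k0)"
        using decC by auto
      from continuous_map_compose[OF continuous_map_compose[OF PhiM psi_c] this]
      show ?thesis by (simp add: o_def H_def)
    qed
    have H_hom: "alg_hom T0 T1 F cF fF (discrete_topology K) d g H"
      unfolding alg_hom_def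
    proof (intro conjI ballI)
      fix a assume "a \<in> topspace F" then show "H a \<in> topspace (discrete_topology K)"
        using decC by (simp add: H_def)
    next
      fix w assume w: "w \<in> topspace T0"
      have "Inr (Inl w) \<in> topspace Y" using w topY by auto
      then have "\<psi> (\<eta> (Inr (Inl w))) = enc K (cst (d w))" using psi_eta by (simp add: \<phi>_def)
      then show "H (cF w) = d w"
        using hom0[OF w] dec_enc[OF Kf cst_FK[OF d_in[OF w]]] k0 by (simp add: H_def E0_def cst_def)
    next
      fix w a assume w: "w \<in> topspace T1" and a: "a \<in> topspace F"
      have "Inr (Inr w) \<in> topspace Y" using w topY by auto
      then have 1: "\<psi> (\<eta> (Inr (Inr w))) = enc K (gx w)" and 2: "\<eta> (Inr (Inr w)) \<in> topspace M"
        using psi_eta eta_in by (auto simp: \<phi>_def)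
      have "\<psi> (\<Phi> (fF w a)) = mop K (enc K (gx w)) (\<psi> (\<Phi> a))"
        using hom1[OF w a] psi_mul[OF 2 Phi_in[OF a]] 1 by (simp add: E1_def)
      then have "H (fF w a) = gx w (H a)"
        using dec_enc[OF Kf gx_FK[OF w]] dec_enc[OF Kf comp_FK[OF gx_FK[OF w] dec_FK]]
        by (simp add: H_def mop_def)
      then show "H (fF w a) = g w (H a)" using decC by (simp add: gx_def H_def)
    qed
    have H_iota: "\<forall>z\<in>topspace X. H (\<iota> z) = h (\<iota> z)"
    proof
      fix z assume z: "z \<in> topspace X"
      have iz: "\<iota> z \<in> topspace F" using funcset_mem[OF continuous_map_funspace[OF iota_c] z] .
      have "Inl z \<in> topspace Y" using z topY by auto
      then have "\<psi> (\<eta> (Inl z)) = enc K (cst (h (\<iota> z)))" using psi_eta by (simp add: \<phi>_def)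
      then show "H (\<iota> z) = h (\<iota> z)"
        using Phi_iota z dec_enc[OF Kf cst_FK[OF h_in[OF iz]]] k0 by (simp add: H_def cst_def)
    qed
    obtain \<psi>0 where uniq: "\<forall>\<psi>'. continuous_map F (discrete_topology K) \<psi>' \<and>
                     alg_hom T0 T1 F cF fF (discrete_topology K) d g \<psi>' \<and>
                     (\<forall>z\<in>topspace X. \<psi>' (\<iota> z) = h (\<iota> z)) \<longrightarrow>
                     (\<forall>a\<in>topspace F. \<psi>' a = \<psi>0 a)"
      using freeF[rule_format, OF conjI[OF fa hi_c]] by (elim exE conjE) (rule that; assumption)
    have u1: "\<forall>a\<in>topspace F. h a = \<psi>0 a" using uniq[rule_format, OF conjI[OF hc conjI[OF hh]]] by simp
    have u2: "\<forall>a\<in>topspace F. H a = \<psi>0 a" using uniq[rule_format, OF conjI[OF H_c conjI[OF H_hom H_iota]]] by simp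
    have "h x = \<psi>0 x" "h y = \<psi>0 y" using u1 x y by auto
    moreover have "H x = \<psi>0 x" "H y = \<psi>0 y" using u2 x y by auto
    ultimately show False using eq hxy by (simp add: H_def)
  qed
  have "homeomorphic_map F (subtopology M S) \<Phi>"
    using bijective_closed_imp_homeomorphic_map[OF Phi_cont[folded S_def] closedmap img inj] .
  then show ?thesis unfolding top_alg_iso_def S_def using Phi_hom by simp
qed

end
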